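(* Let $a,b,u,v$ be integers with $b>a\ge2$ and $u,v\ge2$, and set $X:=ab-a-b$. Consider the properties: (1) $a$, $b$ and $uv-1$ are pairwise coprime; (2) $\frac{1}{a}+\frac{1}{b}+\frac{v}{uv-1}>1$; (3) $vab-1=(uv-1)X$; (4) $a+b+u+v=4+(v-1)\bigl[ab-(u-1)X\bigr]$. If $a,b,u,v$ satisfy (1)–(4), then the triple $(a,b,uv-1)$ is one of $(5,7,3)$, $(4,11,3)$, $(2,7,11)$. If $a,b,u,v$ satisfy (1)–(3), then the triple $(a,b,uv-1)$ is one of $(5,7,3)$, $(4,11,3)$, $(2,7,11)$, $(3,14,5)$, $(3,10,7)$, $(4,5,9)$, $(3,8,11)$, $(3,7,19)$, $(2,9,5)$, or $(2,3,6v-1)$ (with $u=6$). *)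

theory Defs
  imports Complex_Main
begin

definition pairwise_coprime3 :: "int \<Rightarrow> int \<Rightarrow> int \<Rightarrow> bool" where
  "pairwise_coprime3 x y z \<longleftrightarrow> coprime x y \<and> coprime x z \<and> coprime y z"

end

theory Submission
  imports Defs
begin

lemma fin:
  fixes a b u v :: int
  assumes "a \<in> {2,3,4,5}" "b \<in> {3,4,5,6,7,8,9,10,11,12,13,14}" "u \<in> {2,3,4}" "v \<ge> 2" "a < b"
   "pairwise_coprime3 a b (u * v - 1)"
    "v * a * b - 1 = (u * v - 1) * (a * b - a - b)"
  shows "(a, b, u, v) \<in> {(2,7,3,4),(2,9,3,2),(3,7,2,10),(3,8,2,6),(3,10,2,4),(3,14,2,3),
            (4,5,2,5),(4,11,2,2),(5,7,2,2)} \<or> (a = 2 \<and> b = 3 \<and> u = 6)"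
  using assms
  apply (simp only: insert_iff empty_iff)
  apply (elim disjE)
  apply (simp_all add: pairwise_coprime3_def)
  apply (elim conjE; presburger)+
  done
lemma core:
  fixes a b u v :: int
  assumes ba: "b > a" and a2: "a \<ge> 2" and u2: "u \<ge> 2" and v2: "v \<ge> 2"
    and cop: "pairwise_coprime3 a b (u * v - 1)"
    and E0: "v * a * b - 1 = (u * v - 1) * (a * b - a - b)"
  shows "(a, b, u, v) \<in> {(2,7,3,4),(2,9,3,2),(3,7,2,10),(3,8,2,6),(3,10,2,4),(3,14,2,3),
            (4,5,2,5),(4,11,2,2),(5,7,2,2)} \<or> (a = 2 \<and> b = 3 \<and> u = 6)"
proof -
  define X where "X = a*b-a-b"
  define k where "k = u*X - a*b"
  have E0': "v*a*b - 1 = (u*v-1)*X" using E0 X_def by simp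
  have X1: "X \<ge> 1"
  proof -
    have "(a-1)*(b-1) \<ge> 1*2" by (rule mult_mono) (use assms in auto)
    thus ?thesis unfolding X_def by (simp add: algebra_simps)
  qed
  have E: "v*k = X-1" using E0' unfolding k_def by (simp add: algebra_simps)
  have k0: "k \<ge> 0"
  proof (rule ccontr)
    assume "\<not> k \<ge> 0"
    hence "v*k < 0" using v2 by (simp add: mult_pos_neg)
    thus False using E X1 by linarith
  qed
  have k2: "2*k \<le> X-1" using E k0 mult_right_mono[OF v2 k0] by linarith
  have k3: "v \<ge> 3 \<Longrightarrow> 3*k \<le> X-1" using E k0 mult_right_mono[OF _ k0, of 3 v] by linarith
  have uX: "u*X = a*b + k" by (simp add: k_def)
  have uX2: "u*X \<ge> 2*X" using mult_right_mono[OF u2, of X] X1 by linarith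
  have ab: "a*b \<le> 3*a+3*b-1" using uX uX2 k2 X_def by linarith
  have a5: "a \<le> 5"
  proof (rule ccontr)
    assume "\<not> a \<le> 5"
    hence "a*b \<ge> 6*b" using mult_right_mono[of 6 a b] ba a2 by linarith
    thus False using ab ba by linarith
  qed
  have u4: "u \<le> 4 \<or> (a = 2 \<and> b = 3)"
  proof (cases "b = 3")
    case True then show ?thesis using ba a2 by auto
  next
    case False
    hence b4: "b \<ge> 4" using ba a2 by linarith
    show ?thesis
    proof (rule ccontr)
      assume "\<not> ?thesis"
      hence "u \<ge> 5" by auto
      hence "u*X \<ge> 5*X" using mult_right_mono[of 5 u X] X1 by linarith
      moreover have "7*(a*b) - 9*a \<ge> 14*b - 18"
      proof -
        have "a*(7*b-9) \<ge> 2*(7*b-9)" using mult_right_mono[of 2 a "7*b-9"] a2 b4 by linarith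
        thus ?thesis by (simp add: algebra_simps)
      qed
      ultimately show False using uX k2 X_def b4 by linarith
    qed
  qed
  show ?thesis
  proof (cases "a = 2 \<and> b = 3")
    case True
    hence "X = 1" using X_def by simp
    hence "k = 0" using k0 k2 by linarith
    hence "u = 6" using uX True \<open>X = 1\<close> by simp
    thus ?thesis using True by simp
  next
    case False
    hence u4': "u \<le> 4" using u4 by auto
    have b14: "b \<le> 14"
    proof -
      have "a = 2 \<or> a = 3 \<or> a = 4 \<or> a = 5" using a2 a5 by auto
      moreover have "u = 2 \<or> u = 3 \<or> u = 4" using u2 u4' by auto
      moreover have "2*k = X-1 \<or> 3*k \<le> X-1" using v2 k3 E by (cases "v = 2") auto
      ultimately show ?thesis using X_def uX k0 k2 ab ba
        apply (elim disjE)
        apply (simp_all only:)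
        apply (simp_all add: algebra_simps)
        done
    qed
    have "a \<in> {2,3,4,5}" using a2 a5 by auto
    moreover have "b \<in> {3,4,5,6,7,8,9,10,11,12,13,14}"
    proof -
      have "b \<ge> 3" using ba a2 by linarith
      thus ?thesis using b14 by simp presburger
    qed
    moreover have "u \<in> {2,3,4}" using u2 u4' by auto
    ultimately show ?thesis by (rule fin[OF _ _ _ v2 ba cop E0])
  qed
qed

theorem proposition3p3:
  fixes a b u v :: int
  assumes "b > a" and "a \<ge> 2" and "u \<ge> 2" and "v \<ge> 2"
  defines "X \<equiv> a * b - a - b"
  shows "(pairwise_coprime3 a b (u * v - 1)
          \<and> 1 / real_of_int a + 1 / real_of_int b + real_of_int v / real_of_int (u * v - 1) > 1
          \<and> v * a * b - 1 = (u * v - 1) * X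
          \<and> a + b + u + v = 4 + (v - 1) * (a * b - (u - 1) * X)
          \<longrightarrow> (a, b, u * v - 1) \<in> {(5, 7, 3), (4, 11, 3), (2, 7, 11)})
       \<and> (pairwise_coprime3 a b (u * v - 1)
          \<and> 1 / real_of_int a + 1 / real_of_int b + real_of_int v / real_of_int (u * v - 1) > 1
          \<and> v * a * b - 1 = (u * v - 1) * X
          \<longrightarrow> (a, b, u * v - 1) \<in> {(5, 7, 3), (4, 11, 3), (2, 7, 11), (3, 14, 5), (3, 10, 7),
                                     (4, 5, 9), (3, 8, 11), (3, 7, 19), (2, 9, 5)}
              \<or> ((a, b, u * v - 1) = (2, 3, 6 * v - 1) \<and> u = 6))"
proof -
  have C: "(a, b, u, v) \<in> {(2,7,3,4),(2,9,3,2),(3,7,2,10),(3,8,2,6),(3,10,2,4),(3,14,2,3),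
            (4,5,2,5),(4,11,2,2),(5,7,2,2)} \<or> (a = 2 \<and> b = 3 \<and> u = 6)"
    if "pairwise_coprime3 a b (u * v - 1)" "v * a * b - 1 = (u * v - 1) * X"
    using core[OF assms(1-4) that(1) that(2)[unfolded X_def]] .
  show ?thesis
  proof (intro conjI impI)
    assume H: "pairwise_coprime3 a b (u * v - 1)
          \<and> 1 / real_of_int a + 1 / real_of_int b + real_of_int v / real_of_int (u * v - 1) > 1
          \<and> v * a * b - 1 = (u * v - 1) * X
          \<and> a + b + u + v = 4 + (v - 1) * (a * b - (u - 1) * X)"
    hence c: "pairwise_coprime3 a b (u * v - 1)" and e: "v * a * b - 1 = (u * v - 1) * X"
      and f: "a + b + u + v = 4 + (v - 1) * (a * b - (u - 1) * X)" by blast+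
    show "(a, b, u * v - 1) \<in> {(5, 7, 3), (4, 11, 3), (2, 7, 11)}"
      using C[OF c e] f unfolding X_def
      apply (simp only: insert_iff empty_iff prod.inject)
      apply (elim disjE conjE)
      apply simp_all
      done
  next
    assume H: "pairwise_coprime3 a b (u * v - 1)
          \<and> 1 / real_of_int a + 1 / real_of_int b + real_of_int v / real_of_int (u * v - 1) > 1
          \<and> v * a * b - 1 = (u * v - 1) * X"
    hence c: "pairwise_coprime3 a b (u * v - 1)" and e: "v * a * b - 1 = (u * v - 1) * X" by blast+
    show "(a, b, u * v - 1) \<in> {(5, 7, 3), (4, 11, 3), (2, 7, 11), (3, 14, 5), (3, 10, 7),
                                     (4, 5, 9), (3, 8, 11), (3, 7, 19), (2, 9, 5)}
              \<or> ((a, b, u * v - 1) = (2, 3, 6 * v - 1) \<and> u = 6)"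
      using C[OF c e]
      apply (simp only: insert_iff empty_iff prod.inject)
      apply (elim disjE conjE)
      apply simp_all
      done
  qed
qed

end
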